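(* Let $\{X^{(1)}_\ell\}_{\ell\ge1}$ and $\{X^{(2)}_\ell\}_{\ell\ge1}$ be mutually independent real random variables, where $X^{(b)}_\ell$ has mean $\mu_b$ for all $\ell$, with $\mu_1>0>\mu_2$, and suppose there is $\beta>0$ such that for all $b\in\{1,2\}$, $\ell\in\mathbb N$ and $v\in\mathbb R$, $$\mathbb P[X^{(b)}_\ell\ge v]\le e^{-\beta|v-\mu_b|_+^2},\qquad \mathbb P[X^{(b)}_\ell\le v]\le e^{-\beta|\mu_b-v|_+^2}.$$ Define $Y_1=X^{(2)}_1$ and, for $\ell\ge2$, $Y_\ell=Y_{\ell-1}+X^{(1)}_\ell$ if $Y_{\ell-1}<0$ and $Y_\ell=Y_{\ell-1}+X^{(2)}_\ell$ if $Y_{\ell-1}\ge0$. Let $c\ge1$ satisfy $$\min\{\mu_1,-\mu_2\}\ge\sqrt{\pi/\beta}\;e^{c^2/4}.$$ Then for every $\ell\in\mathbb N$ and every $v\in\mathbb R$, $$\mathbb P[|Y_\ell|\ge v]\le2\,e^{-c\sqrt\beta\,(v-\mu_1+\mu_2)}.$$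
   Context: $|a|_+=\max\{0,a\}$. *)

theory Defs
  imports "HOL-Probability.Probability"
begin

text \<open>The switching walk: X b l is the l-th variable of stream b (b = 1 or 2, l \<ge> 1).
  Yw X l is Y_l for l \<ge> 1; the value at l = 0 is a dummy 0.\<close>
fun Yw :: "(nat \<Rightarrow> nat \<Rightarrow> 'a \<Rightarrow> real) \<Rightarrow> nat \<Rightarrow> 'a \<Rightarrow> real" where
  "Yw X 0 \<omega> = 0"
| "Yw X (Suc 0) \<omega> = X 2 1 \<omega>"
| "Yw X (Suc (Suc n)) \<omega> =
     (if Yw X (Suc n) \<omega> < 0 then Yw X (Suc n) \<omega> + X 1 (Suc (Suc n)) \<omega>
      else Yw X (Suc n) \<omega> + X 2 (Suc (Suc n)) \<omega>)"

end

theory Submission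
  imports Defs
begin


lemma exp_ftc:
  fixes lam z :: real assumes "lam > 0"
  shows "ennreal (exp (lam * z)) \<le> 1 + (\<integral>\<^sup>+t. ennreal (lam * exp (lam * t)) * indicator {0..z} t \<partial>lborel)"
proof (cases "z \<ge> 0")
  case True
  have "(\<integral>\<^sup>+t. ennreal (lam * exp (lam * t)) * indicator {0..z} t \<partial>lborel) = exp (lam * z) - exp (lam * 0)"
    by (rule nn_integral_FTC_Icc) (use assms True in \<open>auto intro!: derivative_eq_intros\<close>)
  moreover have e: "exp (lam * z) \<ge> 1" using assms True by simp
  moreover have "ennreal (exp (lam * z)) - 1 = ennreal (exp (lam * z) - 1)"
    by (metis ennreal_1 ennreal_minus zero_le_one)
  moreover have "1 + ennreal (exp (lam * z) - 1) = ennreal (exp (lam * z))"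
    using e by (metis add.commute diff_add_cancel diff_ge_0_iff_ge ennreal_1 ennreal_plus zero_le_one)
  ultimately show ?thesis by simp
next
  case False
  then have "exp (lam * z) \<le> 1" using assms by (simp add: mult_nonneg_nonpos)
  then show ?thesis by (simp add: add_increasing2 ennreal_leI) 
qed

lemma gauss_int:
  fixes lam b :: real assumes "b > 0"
  shows "(\<integral>\<^sup>+t. ennreal (exp (lam * t - b * t\<^sup>2)) \<partial>lborel) = ennreal (sqrt (pi / b) * exp (lam\<^sup>2 / (4*b)))"
proof -
  define s where "s = 1 / sqrt (2 * b)"
  define m where "m = lam / (2*b)"
  have s: "s > 0" using assms by (simp add: s_def)
  have "\<And>t. exp (lam * t - b * t\<^sup>2) = (sqrt (pi / b) * exp (lam\<^sup>2 / (4*b))) * normal_density m s t"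
  proof -
    fix t
    have "lam * t - b * t\<^sup>2 = lam\<^sup>2 / (4*b) + (-(t - m)\<^sup>2 / (2 * s\<^sup>2))"
      using assms by (simp add: s_def m_def field_simps power2_eq_square)
    moreover have "sqrt (2 * pi * s\<^sup>2) = sqrt (pi / b)"
      using assms by (simp add: s_def field_simps)
    ultimately show "exp (lam * t - b * t\<^sup>2) = (sqrt (pi / b) * exp (lam\<^sup>2 / (4*b))) * normal_density m s t"
      using assms by (simp add: normal_density_def flip: exp_add)
  qed
  moreover have nn: "0 \<le> sqrt (pi / b) * exp (lam\<^sup>2 / (4*b))" using assms by simp
  ultimately have "(\<integral>\<^sup>+t. ennreal (exp (lam * t - b * t\<^sup>2)) \<partial>lborel)
      = (\<integral>\<^sup>+t. ennreal (sqrt (pi / b) * exp (lam\<^sup>2 / (4*b))) * ennreal (normal_density m s t) \<partial>lborel)"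
    using ennreal_mult[OF nn normal_density_nonneg] by (intro nn_integral_cong) simp
  also have "\<dots> = ennreal (sqrt (pi / b) * exp (lam\<^sup>2 / (4*b))) * (\<integral>\<^sup>+t. ennreal (normal_density m s t) \<partial>lborel)"
    by (rule nn_integral_cmult) simp
  also have "(\<integral>\<^sup>+t. ennreal (normal_density m s t) \<partial>lborel) = 1"
    using integrable_normal_density[OF s] integral_normal_density[OF s]
    by (simp add: nn_integral_eq_integral normal_density_nonneg)
  finally show ?thesis by simp
qed

lemma mgf_bound:
  fixes W :: "'a \<Rightarrow> real"
  assumes "prob_space M" and W[measurable]: "W \<in> borel_measurable M" and b: "\<beta> > 0" and lam: "lam > 0"
    and tail: "\<And>t. t \<ge> 0 \<Longrightarrow> measure M {\<omega>\<in>space M. W \<omega> \<ge> m + t} \<le> exp (- \<beta> * t\<^sup>2)"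
  shows "(\<integral>\<^sup>+\<omega>. ennreal (exp (lam * W \<omega>)) \<partial>M)
      \<le> ennreal (exp (lam * m) * (1 + lam * sqrt (pi / \<beta>) * exp (lam\<^sup>2 / (4 * \<beta>))))"
proof -
  interpret prob_space M by fact
  interpret P: pair_sigma_finite M lborel
    by (simp add: pair_sigma_finite_def lborel.sigma_finite_measure_axioms sigma_finite_measure_axioms)
  define g where "g = (\<lambda>\<omega> t. if 0 \<le> t \<and> t \<le> W \<omega> - m then ennreal (lam * exp (lam * t)) else 0)"
  have gm: "case_prod g \<in> borel_measurable (M \<Otimes>\<^sub>M lborel)"
    unfolding g_def by measurable
  have "(\<integral>\<^sup>+\<omega>. ennreal (exp (lam * W \<omega>)) \<partial>M)
      \<le> (\<integral>\<^sup>+\<omega>. ennreal (exp (lam * m)) * (1 + (\<integral>\<^sup>+t. g \<omega> t \<partial>lborel)) \<partial>M)"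
  proof (intro nn_integral_mono)
    fix \<omega>
    have "exp (lam * W \<omega>) = exp (lam * m) * exp (lam * (W \<omega> - m))"
      by (simp add: algebra_simps flip: exp_add)
    then have "ennreal (exp (lam * W \<omega>)) = ennreal (exp (lam * m)) * ennreal (exp (lam * (W \<omega> - m)))"
      by (simp add: ennreal_mult)
    also have "\<dots> \<le> ennreal (exp (lam * m)) * (1 + (\<integral>\<^sup>+t. ennreal (lam * exp (lam * t)) * indicator {0..W \<omega> - m} t \<partial>lborel))"
      by (intro mult_left_mono exp_ftc lam) simp
    also have "(\<integral>\<^sup>+t. ennreal (lam * exp (lam * t)) * indicator {0..W \<omega> - m} t \<partial>lborel) = (\<integral>\<^sup>+t. g \<omega> t \<partial>lborel)"
      by (intro nn_integral_cong) (simp add: g_def indicator_def)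
    finally show "ennreal (exp (lam * W \<omega>)) \<le> ennreal (exp (lam * m)) * (1 + (\<integral>\<^sup>+t. g \<omega> t \<partial>lborel))" .
  qed
  also have "\<dots> = ennreal (exp (lam * m)) * (1 + (\<integral>\<^sup>+\<omega>. (\<integral>\<^sup>+t. g \<omega> t \<partial>lborel) \<partial>M))"
  proof -
    have mm: "(\<lambda>\<omega>. \<integral>\<^sup>+t. g \<omega> t \<partial>lborel) \<in> borel_measurable M"
      using lborel.borel_measurable_nn_integral_fst[OF gm] by simp
    show ?thesis
      using mm by (subst nn_integral_cmult) (auto simp: nn_integral_add emeasure_space_1)
  qed
  also have "(\<integral>\<^sup>+\<omega>. (\<integral>\<^sup>+t. g \<omega> t \<partial>lborel) \<partial>M) = (\<integral>\<^sup>+t. (\<integral>\<^sup>+\<omega>. g \<omega> t \<partial>M) \<partial>lborel)"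
    using P.Fubini'[OF gm] by simp
  also have "\<dots> \<le> (\<integral>\<^sup>+t. ennreal lam * ennreal (exp (lam * t - \<beta> * t\<^sup>2)) \<partial>lborel)"
  proof (intro nn_integral_mono)
    fix t :: real
    show "(\<integral>\<^sup>+\<omega>. g \<omega> t \<partial>M) \<le> ennreal lam * ennreal (exp (lam * t - \<beta> * t\<^sup>2))"
    proof (cases "t \<ge> 0")
      case False
      then show ?thesis by (simp add: g_def)
    next
      case True
      have "(\<integral>\<^sup>+\<omega>. g \<omega> t \<partial>M) = (\<integral>\<^sup>+\<omega>. ennreal (lam * exp (lam * t)) * indicator {\<omega>\<in>space M. W \<omega> \<ge> m + t} \<omega> \<partial>M)"
        using True by (intro nn_integral_cong) (auto simp: g_def indicator_def)
      also have "\<dots> = ennreal (lam * exp (lam * t)) * emeasure M {\<omega>\<in>space M. W \<omega> \<ge> m + t}"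
        by (subst nn_integral_cmult_indicator) auto
      also have "\<dots> \<le> ennreal (lam * exp (lam * t)) * ennreal (exp (- \<beta> * t\<^sup>2))"
        using tail[OF True] by (intro mult_left_mono) (auto simp: emeasure_eq_measure)
      also have "\<dots> = ennreal lam * ennreal (exp (lam * t - \<beta> * t\<^sup>2))"
        using lam by (simp add: ennreal_mult[symmetric] exp_diff exp_minus field_simps)
      finally show ?thesis .
    qed
  qed
  also have "\<dots> = ennreal lam * (\<integral>\<^sup>+t. ennreal (exp (lam * t - \<beta> * t\<^sup>2)) \<partial>lborel)"
    by (rule nn_integral_cmult) simp
  also have "\<dots> = ennreal (lam * (sqrt (pi / \<beta>) * exp (lam\<^sup>2 / (4*\<beta>))))"
    using lam b by (simp add: gauss_int ennreal_mult)
  finally have "(\<integral>\<^sup>+\<omega>. ennreal (exp (lam * W \<omega>)) \<partial>M)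
      \<le> ennreal (exp (lam * m)) * (1 + ennreal (lam * (sqrt (pi / \<beta>) * exp (lam\<^sup>2 / (4*\<beta>)))))"
    by (simp add: mult_left_mono add_left_mono)
  also have "\<dots> = ennreal (exp (lam * m) * (1 + lam * sqrt (pi / \<beta>) * exp (lam\<^sup>2 / (4 * \<beta>))))"
  proof -
    have x: "0 \<le> lam * (sqrt (pi / \<beta>) * exp (lam\<^sup>2 / (4*\<beta>)))" using lam b by simp
    have "1 + ennreal (lam * (sqrt (pi / \<beta>) * exp (lam\<^sup>2 / (4*\<beta>))))
        = ennreal (1 + lam * (sqrt (pi / \<beta>) * exp (lam\<^sup>2 / (4*\<beta>))))"
      using ennreal_plus[OF zero_le_one x] by simp
    moreover have "ennreal (exp (lam * m)) * ennreal (1 + lam * (sqrt (pi / \<beta>) * exp (lam\<^sup>2 / (4*\<beta>))))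
       = ennreal (exp (lam * m) * (1 + lam * (sqrt (pi / \<beta>) * exp (lam\<^sup>2 / (4*\<beta>)))))"
      using x by (simp add: ennreal_mult)
    ultimately show ?thesis by (simp add: mult.assoc)
  qed
  finally show ?thesis .
qed



lemma exp22: "exp (2.2::real) \<ge> 7.4"
proof -
  have "(1 + 2.2 / real 20) ^ 20 \<le> exp (2.2::real)"
    by (rule exp_ge_one_plus_x_over_n_power_n) auto
  moreover have "(1 + 2.2 / real 20) ^ 20 \<ge> (7.4::real)" by (simp add: power_numeral_reduce)
  ultimately show ?thesis by linarith
qed

lemma exp_big: fixes A :: real assumes "A \<ge> 2.2" shows "exp A \<ge> 3 + 2 * A"
proof -
  have "exp A = exp 2.2 * exp (A - 2.2)" by (simp flip: exp_add)
  also have "\<dots> \<ge> exp 2.2 * (1 + (A - 2.2))"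
    by (intro mult_left_mono exp_ge_add_one_self) auto
  finally have "exp A \<ge> exp 2.2 * (1 + (A - 2.2))" .
  moreover have "exp 2.2 * (1 + (A - 2.2)) \<ge> 7.4 * (1 + (A - 2.2))"
    using exp22 assms by (intro mult_right_mono) auto
  moreover have "7.4 * (1 + (A - 2.2)) \<ge> 3 + 2 * A" using assms by (simp add: field_simps)
  ultimately show ?thesis by (meson order_trans)
qed

lemma keyE: fixes A E :: real assumes E: "E \<ge> 3 + 2 * A" and A: "A \<ge> 0"
  shows "(1 + A) / E < 1" and "1 + (1 + A) / (1 - (1 + A) / E) \<le> E"
proof -
  have Ep: "E > 0" using E A by linarith
  have d: "E - 1 - A > 0" using E A by linarith
  show "(1 + A) / E < 1" using d Ep by (simp add: divide_less_eq)
  have "1 - (1 + A) / E = (E - 1 - A) / E" using Ep by (simp add: field_simps)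
  then have "(1 + A) / (1 - (1 + A) / E) = E * (1 + A) / (E - 1 - A)"
    using Ep d by simp
  moreover have "E * (1 + A) \<le> (E - 1) * (E - 1 - A)"
  proof -
    have "0 \<le> E * (E - 3 - 2 * A)" using E Ep by simp
    then show ?thesis using A by (simp add: algebra_simps)
  qed
  ultimately have "(1 + A) / (1 - (1 + A) / E) \<le> E - 1"
    using d by (simp add: divide_le_eq)
  then show "1 + (1 + A) / (1 - (1 + A) / E) \<le> E" by simp
qed

lemma keyK: fixes A :: real assumes "A \<ge> 2.2"
  shows "(1 + A) * exp (- A) < 1" and "1 + (1 + A) / (1 - (1 + A) * exp (- A)) \<le> exp A"
proof -
  have h: "(1 + A) * exp (- A) = (1 + A) / exp A" by (simp add: exp_minus divide_inverse)
  show "(1 + A) * exp (- A) < 1" "1 + (1 + A) / (1 - (1 + A) * exp (- A)) \<le> exp A"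
    unfolding h using keyE[OF exp_big[OF assms]] assms by auto
qed

lemma a_big: fixes c :: real assumes "c \<ge> 1" shows "c * sqrt pi * exp (c\<^sup>2 / 4) \<ge> 2.2"
proof -
  have "sqrt pi \<ge> sqrt (1.77\<^sup>2)" using pi_approx(1) by (intro real_sqrt_le_mono) (simp add: power2_eq_square)
  then have sp: "sqrt pi \<ge> 1.77" by simp
  have "c\<^sup>2 \<ge> 1" using assms by (simp add: one_le_power)
  then have "exp (c\<^sup>2 / 4) \<ge> exp (1/4)" by simp
  moreover have "exp (1/4::real) \<ge> 1.25" using exp_ge_add_one_self[of "1/4::real"] by simp
  ultimately have ee: "exp (c\<^sup>2 / 4) \<ge> 1.25" by linarith
  have "c * sqrt pi * exp (c\<^sup>2 / 4) \<ge> 1 * 1.77 * 1.25"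
    using assms sp ee by (intro mult_mono) auto
  then show ?thesis by simp
qed



lemma Yw_Suc: "Yw X (Suc n) \<omega> = Yw X n \<omega> + (if Yw X n \<omega> < 0 then X 1 (Suc n) \<omega> else X 2 (Suc n) \<omega>)"
  by (cases n) auto

lemma Yw_upper:
  "Yw X l \<omega> \<le> (\<Sum>j\<in>{1..l}. X 2 j \<omega>) \<or>
   (\<exists>k<l. Yw X l \<omega> \<le> X 1 (Suc k) \<omega> + (\<Sum>j\<in>{Suc (Suc k)..l}. X 2 j \<omega>))"
proof (induction l)
  case 0
  then show ?case by simp
next
  case (Suc l)
  show ?case
  proof (cases "Yw X l \<omega> < 0")
    case True
    then have "Yw X (Suc l) \<omega> \<le> X 1 (Suc l) \<omega> + (\<Sum>j\<in>{Suc (Suc l)..Suc l}. X 2 j \<omega>)"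
      by (simp add: Yw_Suc)
    then show ?thesis by blast
  next
    case False
    then have e: "Yw X (Suc l) \<omega> = Yw X l \<omega> + X 2 (Suc l) \<omega>" by (simp add: Yw_Suc)
    from Suc.IH show ?thesis
    proof
      assume "Yw X l \<omega> \<le> (\<Sum>j\<in>{1..l}. X 2 j \<omega>)"
      then show ?thesis using e by simp
    next
      assume "\<exists>k<l. Yw X l \<omega> \<le> X 1 (Suc k) \<omega> + (\<Sum>j\<in>{Suc (Suc k)..l}. X 2 j \<omega>)"
      then obtain k where k: "k < l" "Yw X l \<omega> \<le> X 1 (Suc k) \<omega> + (\<Sum>j\<in>{Suc (Suc k)..l}. X 2 j \<omega>)" by blast
      have "(\<Sum>j\<in>{Suc (Suc k)..Suc l}. X 2 j \<omega>) = (\<Sum>j\<in>{Suc (Suc k)..l}. X 2 j \<omega>) + X 2 (Suc l) \<omega>"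
        using k(1) by simp
      then have "Yw X (Suc l) \<omega> \<le> X 1 (Suc k) \<omega> + (\<Sum>j\<in>{Suc (Suc k)..Suc l}. X 2 j \<omega>)"
        using e k(2) by simp
      then show ?thesis using k(1) less_SucI by blast
    qed
  qed
qed

lemma Yw_lower:
  "Yw X l \<omega> \<ge> 0 \<or>
   (\<exists>k<l. Yw X l \<omega> \<ge> X 2 (Suc k) \<omega> + (\<Sum>j\<in>{Suc (Suc k)..l}. X 1 j \<omega>))"
proof (induction l)
  case 0
  then show ?case by simp
next
  case (Suc l)
  show ?case
  proof (cases "Yw X l \<omega> < 0")
    case False
    then have "Yw X (Suc l) \<omega> \<ge> X 2 (Suc l) \<omega> + (\<Sum>j\<in>{Suc (Suc l)..Suc l}. X 1 j \<omega>)"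
      by (simp add: Yw_Suc)
    then show ?thesis by blast
  next
    case True
    then have e: "Yw X (Suc l) \<omega> = Yw X l \<omega> + X 1 (Suc l) \<omega>" by (simp add: Yw_Suc)
    from Suc.IH True obtain k where k: "k < l" "Yw X l \<omega> \<ge> X 2 (Suc k) \<omega> + (\<Sum>j\<in>{Suc (Suc k)..l}. X 1 j \<omega>)"
      by auto
    have "(\<Sum>j\<in>{Suc (Suc k)..Suc l}. X 1 j \<omega>) = (\<Sum>j\<in>{Suc (Suc k)..l}. X 1 j \<omega>) + X 1 (Suc l) \<omega>"
      using k(1) by simp
    then have "Yw X (Suc l) \<omega> \<ge> X 2 (Suc k) \<omega> + (\<Sum>j\<in>{Suc (Suc k)..Suc l}. X 1 j \<omega>)"
      using e k(2) by simp
    then show ?thesis using k(1) less_SucI by blast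
  qed
qed



lemma chern_sum:
  fixes X :: "nat \<Rightarrow> nat \<Rightarrow> 'a \<Rightarrow> real" and s lam v :: real
  assumes "prob_space M" and ind: "prob_space.indep_vars M (\<lambda>_. borel) (\<lambda>(b, l). X b l) I"
    and fin: "finite J" and JI: "J \<subseteq> I" and lam: "lam > 0"
    and bnd: "\<And>i. i \<in> J \<Longrightarrow> (\<integral>\<^sup>+\<omega>. ennreal (exp (lam * (s * X (fst i) (snd i) \<omega>))) \<partial>M) \<le> ennreal (B i)"
    and Bnn: "\<And>i. i \<in> J \<Longrightarrow> 0 \<le> B i"
  shows "measure M {\<omega>\<in>space M. v \<le> s * (\<Sum>i\<in>J. X (fst i) (snd i) \<omega>)} \<le> exp (- lam * v) * (\<Prod>i\<in>J. B i)"
proof -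
  interpret prob_space M by fact
  have indJ: "indep_vars (\<lambda>_. borel) (\<lambda>(b, l). X b l) J"
    using indep_vars_subset[OF ind JI] .
  have meas: "X (fst i) (snd i) \<in> borel_measurable M" if "i \<in> J" for i
    using indJ that unfolding indep_vars_def by (cases i) auto
  have ind2: "indep_vars (\<lambda>_. borel) (\<lambda>i \<omega>. ennreal (exp (lam * (s * X (fst i) (snd i) \<omega>)))) J"
  proof -
    have "indep_vars (\<lambda>_. borel) (\<lambda>i \<omega>. (\<lambda>x. ennreal (exp (lam * (s * x)))) ((\<lambda>(b, l). X b l) i \<omega>)) J"
      by (rule indep_vars_compose2[OF indJ]) auto
    then show ?thesis by (simp add: case_prod_beta)
  qed
  have sm: "(\<lambda>\<omega>. s * (\<Sum>i\<in>J. X (fst i) (snd i) \<omega>)) \<in> borel_measurable M"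
    using meas by measurable
  have "emeasure M {\<omega>\<in>space M. v \<le> s * (\<Sum>i\<in>J. X (fst i) (snd i) \<omega>)}
     \<le> ennreal (exp (- lam * v)) * (\<integral>\<^sup>+\<omega>. ennreal (exp (lam * (s * (\<Sum>i\<in>J. X (fst i) (snd i) \<omega>)))) * indicator (space M) \<omega> \<partial>M)"
    by (rule Chernoff_ineq_nn_integral_ge[OF lam]) (use sm in auto)
  also have "(\<integral>\<^sup>+\<omega>. ennreal (exp (lam * (s * (\<Sum>i\<in>J. X (fst i) (snd i) \<omega>)))) * indicator (space M) \<omega> \<partial>M)
      = (\<integral>\<^sup>+\<omega>. (\<Prod>i\<in>J. ennreal (exp (lam * (s * X (fst i) (snd i) \<omega>)))) \<partial>M)"
    by (intro nn_integral_cong) (simp add: sum_distrib_left exp_sum fin prod_ennreal)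
  also have "\<dots> = (\<Prod>i\<in>J. \<integral>\<^sup>+\<omega>. ennreal (exp (lam * (s * X (fst i) (snd i) \<omega>))) \<partial>M)"
    by (rule indep_vars_nn_integral[OF fin ind2]) simp
  also have "\<dots> \<le> (\<Prod>i\<in>J. ennreal (B i))"
    by (intro prod_mono_ennreal bnd)
  also have "\<dots> = ennreal (\<Prod>i\<in>J. B i)"
    using Bnn by (simp add: prod_ennreal)
  finally have "emeasure M {\<omega>\<in>space M. v \<le> s * (\<Sum>i\<in>J. X (fst i) (snd i) \<omega>)}
      \<le> ennreal (exp (- lam * v) * (\<Prod>i\<in>J. B i))"
    using Bnn by (simp add: ennreal_mult prod_nonneg mult_left_mono)
  then show ?thesis
    using Bnn by (simp add: emeasure_eq_measure ennreal_le_iff prod_nonneg)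
qed



lemma geo: fixes q :: real assumes "0 \<le> q" "q < 1"
  shows "(\<Sum>k<l. q ^ (l - Suc k)) \<le> 1 / (1 - q)"
proof -
  have "(\<Sum>k<l. q ^ (l - Suc k)) = (\<Sum>k<l. q ^ k)"
    by (rule sum.nat_diff_reindex)
  also have "\<dots> = (1 - q ^ l) / (1 - q)" using assms by (simp add: sum_gp_strict)
  also have "\<dots> \<le> 1 / (1 - q)" using assms by (intro divide_right_mono) auto
  finally show ?thesis .
qed

lemma qbound: fixes a A :: real assumes "a \<ge> 2.2" "a \<le> A"
  shows "0 \<le> exp (- A) * (1 + a)" "exp (- A) * (1 + a) < 1"
    "1 / (1 - exp (- A) * (1 + a)) \<le> 1 / (1 - (1 + A) * exp (- A))"
proof -
  have le: "exp (- A) * (1 + a) \<le> (1 + A) * exp (- A)" using assms by simp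
  have lt: "(1 + A) * exp (- A) < 1" using keyK(1)[of A] assms by simp
  show "0 \<le> exp (- A) * (1 + a)" using assms by simp
  show "exp (- A) * (1 + a) < 1" using le lt by linarith
  show "1 / (1 - exp (- A) * (1 + a)) \<le> 1 / (1 - (1 + A) * exp (- A))"
  proof (rule divide_left_mono)
    have p1: "0 < 1 - (1 + A) * exp (- A)" using lt by linarith
    have p2: "0 < 1 - exp (- A) * (1 + a)" using le lt by linarith
    show "0 < (1 - exp (- A) * (1 + a)) * (1 - (1 + A) * exp (- A))" using p1 p2 by simp
  qed (use le in auto)
qed

lemma final_arith:
  fixes a A1 A2 :: real and l :: nat
  assumes a: "a \<ge> 2.2" "a \<le> A1" "a \<le> A2"
  shows "(exp (- A2) * (1 + a)) ^ l + exp A1 * (1 + a) * (\<Sum>k<l. (exp (- A2) * (1 + a)) ^ (l - Suc k))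
           \<le> exp A1 * exp A2"
    and "exp A2 * (1 + a) * (\<Sum>k<l. (exp (- A1) * (1 + a)) ^ (l - Suc k)) \<le> exp A1 * exp A2"
proof -
  have K2: "1 + (1 + A2) / (1 - (1 + A2) * exp (- A2)) \<le> exp A2" using keyK(2)[of A2] a by simp
  have K1: "1 + (1 + A1) / (1 - (1 + A1) * exp (- A1)) \<le> exp A1" using keyK(2)[of A1] a by simp
  note Q2 = qbound[of a A2] and Q1 = qbound[of a A1]
  have G2: "(\<Sum>k<l. (exp (- A2) * (1 + a)) ^ (l - Suc k)) \<le> 1 / (1 - (1 + A2) * exp (- A2))"
    using geo[of "exp (- A2) * (1 + a)" l] Q2 a by linarith
  have G1: "(\<Sum>k<l. (exp (- A1) * (1 + a)) ^ (l - Suc k)) \<le> 1 / (1 - (1 + A1) * exp (- A1))"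
    using geo[of "exp (- A1) * (1 + a)" l] Q1 a by linarith
  have ql: "(exp (- A2) * (1 + a)) ^ l \<le> 1"
    using Q2 a by (intro power_le_one) auto
  have "exp A1 * (1 + a) * (\<Sum>k<l. (exp (- A2) * (1 + a)) ^ (l - Suc k))
      \<le> exp A1 * (1 + A2) * (1 / (1 - (1 + A2) * exp (- A2)))"
    using G2 a by (intro mult_mono) (auto intro!: sum_nonneg)
  also have "\<dots> = exp A1 * ((1 + A2) / (1 - (1 + A2) * exp (- A2)))" by simp
  finally have XX: "exp A1 * (1 + a) * (\<Sum>k<l. (exp (- A2) * (1 + a)) ^ (l - Suc k))
      \<le> exp A1 * ((1 + A2) / (1 - (1 + A2) * exp (- A2)))" .
  have e1: "1 \<le> exp A1" using a by simp
  have "(exp (- A2) * (1 + a)) ^ l + exp A1 * (1 + a) * (\<Sum>k<l. (exp (- A2) * (1 + a)) ^ (l - Suc k))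
      \<le> exp A1 * 1 + exp A1 * ((1 + A2) / (1 - (1 + A2) * exp (- A2)))"
    using ql XX e1 by linarith
  also have "\<dots> = exp A1 * (1 + (1 + A2) / (1 - (1 + A2) * exp (- A2)))" by (simp add: algebra_simps)
  also have "\<dots> \<le> exp A1 * exp A2" using K2 by simp
  finally show "(exp (- A2) * (1 + a)) ^ l + exp A1 * (1 + a) * (\<Sum>k<l. (exp (- A2) * (1 + a)) ^ (l - Suc k))
           \<le> exp A1 * exp A2" .
  have "exp A2 * (1 + a) * (\<Sum>k<l. (exp (- A1) * (1 + a)) ^ (l - Suc k))
      \<le> exp A2 * (1 + A1) * (1 / (1 - (1 + A1) * exp (- A1)))"
    using G1 a by (intro mult_mono) (auto intro!: sum_nonneg)
  also have "\<dots> = exp A2 * ((1 + A1) / (1 - (1 + A1) * exp (- A1)))" by simp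
  also have "\<dots> \<le> exp A2 * exp A1" using K1 by (intro mult_left_mono) auto
  finally show "exp A2 * (1 + a) * (\<Sum>k<l. (exp (- A1) * (1 + a)) ^ (l - Suc k)) \<le> exp A1 * exp A2"
    by (simp add: mult.commute)
qed



theorem lemma4:
  fixes M :: "'a measure" and X :: "nat \<Rightarrow> nat \<Rightarrow> 'a \<Rightarrow> real"
    and \<mu>1 \<mu>2 \<beta> c :: real
  assumes "prob_space M"
    and indep: "prob_space.indep_vars M (\<lambda>_. borel) (\<lambda>(b, l). X b l) ({1, 2} \<times> {1..})"
    and integ: "\<And>b l. b \<in> {1, 2} \<Longrightarrow> l \<ge> 1 \<Longrightarrow> integrable M (X b l)"
    and mean1: "\<And>l. l \<ge> 1 \<Longrightarrow> integral\<^sup>L M (X 1 l) = \<mu>1"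
    and mean2: "\<And>l. l \<ge> 1 \<Longrightarrow> integral\<^sup>L M (X 2 l) = \<mu>2"
    and "\<mu>1 > 0" and "\<mu>2 < 0"
    and "\<beta> > 0"
    and up: "\<And>b l v. b \<in> {1, 2} \<Longrightarrow> l \<ge> 1 \<Longrightarrow>
       measure M {\<omega> \<in> space M. X b l \<omega> \<ge> v}
         \<le> exp (- \<beta> * (max 0 (v - (if b = 1 then \<mu>1 else \<mu>2)))\<^sup>2)"
    and low: "\<And>b l v. b \<in> {1, 2} \<Longrightarrow> l \<ge> 1 \<Longrightarrow>
       measure M {\<omega> \<in> space M. X b l \<omega> \<le> v}
         \<le> exp (- \<beta> * (max 0 ((if b = 1 then \<mu>1 else \<mu>2) - v))\<^sup>2)"
    and "c \<ge> 1"
    and "min \<mu>1 (- \<mu>2) \<ge> sqrt (pi / \<beta>) * exp (c\<^sup>2 / 4)"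
  shows "\<forall>l \<ge> 1. \<forall>v::real.
     measure M {\<omega> \<in> space M. \<bar>Yw X l \<omega>\<bar> \<ge> v}
       \<le> 2 * exp (- c * sqrt \<beta> * (v - \<mu>1 + \<mu>2))"
proof -
  interpret prob_space M by fact
  note mu1 = \<open>\<mu>1 > 0\<close> and mu2 = \<open>\<mu>2 < 0\<close> and bpos = \<open>\<beta> > 0\<close> and c1 = \<open>c \<ge> 1\<close>
  define lam where "lam = c * sqrt \<beta>"
  have lam: "lam > 0" using c1 bpos by (simp add: lam_def)
  define a where "a = lam * sqrt (pi / \<beta>) * exp (lam\<^sup>2 / (4 * \<beta>))"
  have l2: "lam\<^sup>2 = c\<^sup>2 * \<beta>"
    using bpos by (simp add: lam_def power_mult_distrib)
  have ee: "exp (lam\<^sup>2 / (4 * \<beta>)) = exp (c\<^sup>2 / 4)"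
    using bpos by (simp add: l2)
  have "a = c * sqrt pi * exp (c\<^sup>2 / 4)"
    unfolding a_def ee using bpos by (simp add: lam_def real_sqrt_divide)
  then have a22: "a \<ge> 2.2" using a_big[OF c1] by simp
  have aA1: "a \<le> lam * \<mu>1"
  proof -
    have "sqrt (pi / \<beta>) * exp (c\<^sup>2 / 4) \<le> \<mu>1" using \<open>min \<mu>1 (- \<mu>2) \<ge> sqrt (pi / \<beta>) * exp (c\<^sup>2 / 4)\<close> by simp
    then show ?thesis unfolding a_def ee using lam
      by (metis mult.assoc mult_le_cancel_left_pos)
  qed
  have aA2: "a \<le> lam * (- \<mu>2)"
  proof -
    have "sqrt (pi / \<beta>) * exp (c\<^sup>2 / 4) \<le> - \<mu>2" using \<open>min \<mu>1 (- \<mu>2) \<ge> sqrt (pi / \<beta>) * exp (c\<^sup>2 / 4)\<close> by simp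
    then show ?thesis unfolding a_def ee using lam
      by (metis mult.assoc mult_le_cancel_left_pos)
  qed
  have meas: "X b l \<in> borel_measurable M" if "b \<in> {1, 2}" "l \<ge> 1" for b l
    using indep that unfolding indep_vars_def by auto
  define mu where "mu b = (if b = (1::nat) then \<mu>1 else \<mu>2)" for b
  have mgf_up: "(\<integral>\<^sup>+\<omega>. ennreal (exp (lam * (1 * X b l \<omega>))) \<partial>M) \<le> ennreal (exp (lam * mu b) * (1 + a))"
    if "b \<in> {1, 2}" "l \<ge> 1" for b l
  proof -
    have "(\<integral>\<^sup>+\<omega>. ennreal (exp (lam * X b l \<omega>)) \<partial>M) \<le> ennreal (exp (lam * mu b) * (1 + a))"
      unfolding a_def
    proof (rule mgf_bound[OF \<open>prob_space M\<close> meas[OF that] bpos lam])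
      fix t :: real assume t: "t \<ge> 0"
      show "measure M {\<omega> \<in> space M. mu b + t \<le> X b l \<omega>} \<le> exp (- \<beta> * t\<^sup>2)"
        using up[OF that, of "mu b + t"] t by (simp add: mu_def)
    qed
    then show ?thesis by simp
  qed
  have mgf_low: "(\<integral>\<^sup>+\<omega>. ennreal (exp (lam * (-1 * X b l \<omega>))) \<partial>M) \<le> ennreal (exp (lam * (- mu b)) * (1 + a))"
    if "b \<in> {1, 2}" "l \<ge> 1" for b l
  proof -
    have mm: "(\<lambda>\<omega>. - X b l \<omega>) \<in> borel_measurable M" using meas[OF that] by measurable
    have "(\<integral>\<^sup>+\<omega>. ennreal (exp (lam * (- X b l \<omega>))) \<partial>M) \<le> ennreal (exp (lam * (- mu b)) * (1 + a))"
      unfolding a_def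
    proof (rule mgf_bound[OF \<open>prob_space M\<close> mm bpos lam])
      fix t :: real assume t: "t \<ge> 0"
      have "{\<omega> \<in> space M. - mu b + t \<le> - X b l \<omega>} = {\<omega> \<in> space M. X b l \<omega> \<le> mu b - t}"
        by auto
      then show "measure M {\<omega> \<in> space M. - mu b + t \<le> - X b l \<omega>} \<le> exp (- \<beta> * t\<^sup>2)"
        using low[OF that, of "mu b - t"] t by (simp add: mu_def)
    qed
    then show ?thesis by simp
  qed
  have mgf: "(\<integral>\<^sup>+\<omega>. ennreal (exp (lam * (s * X b l \<omega>))) \<partial>M) \<le> ennreal (exp (lam * (s * mu b)) * (1 + a))"
    if "b \<in> {1, 2}" "l \<ge> 1" "s \<in> {1, -1}" for b l s
    using mgf_up[OF that(1,2)] mgf_low[OF that(1,2)] that(3) by auto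
  have a0: "0 \<le> 1 + a" using a22 by simp
  have gen: "measure M {\<omega> \<in> space M. v \<le> s * (X b' (Suc k) \<omega> + (\<Sum>j\<in>{Suc (Suc k)..l}. X b j \<omega>))}
      \<le> exp (- lam * v) * (exp (lam * (s * mu b')) * (1 + a) * (exp (lam * (s * mu b)) * (1 + a)) ^ (l - Suc k))"
    if bb: "b \<in> {1, 2}" "b' \<in> {1, 2}" "b \<noteq> b'" and s: "s \<in> {1, -1}" for b b' k l s v
  proof -
    define J where "J = insert (b', Suc k) ((\<lambda>j. (b, j)) ` {Suc (Suc k)..l})"
    have fin: "finite J" by (simp add: J_def)
    have JI: "J \<subseteq> {1, 2} \<times> {1..}" using bb by (auto simp: J_def)
    have notin: "(b', Suc k) \<notin> (\<lambda>j. (b, j)) ` {Suc (Suc k)..l}" using bb by auto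
    have inj: "inj_on (\<lambda>j. (b, j)) A" for A :: "nat set" by (simp add: inj_on_def)
    have sumJ: "(\<Sum>i\<in>J. X (fst i) (snd i) \<omega>) = X b' (Suc k) \<omega> + (\<Sum>j\<in>{Suc (Suc k)..l}. X b j \<omega>)" for \<omega>
      by (simp add: J_def notin sum.reindex inj)
    have prodJ: "(\<Prod>i\<in>J. exp (lam * (s * mu (fst i))) * (1 + a))
        = exp (lam * (s * mu b')) * (1 + a) * (exp (lam * (s * mu b)) * (1 + a)) ^ (l - Suc k)"
      by (simp add: J_def notin prod.reindex inj)
    have "measure M {\<omega> \<in> space M. v \<le> s * (\<Sum>i\<in>J. X (fst i) (snd i) \<omega>)}
        \<le> exp (- lam * v) * (\<Prod>i\<in>J. exp (lam * (s * mu (fst i))) * (1 + a))"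
    proof (rule chern_sum[OF \<open>prob_space M\<close> indep fin JI lam])
      fix i assume i: "i \<in> J"
      then have "fst i \<in> {1, 2}" "snd i \<ge> 1" using JI by auto
      then show "(\<integral>\<^sup>+\<omega>. ennreal (exp (lam * (s * X (fst i) (snd i) \<omega>))) \<partial>M)
          \<le> ennreal (exp (lam * (s * mu (fst i))) * (1 + a))"
        by (rule mgf[OF _ _ s])
    next
      fix i show "0 \<le> exp (lam * (s * mu (fst i))) * (1 + a)" using a0 by simp
    qed
    then show ?thesis by (simp only: sumJ prodJ)
  qed
  have gen0: "measure M {\<omega> \<in> space M. v \<le> (\<Sum>j\<in>{1..l}. X 2 j \<omega>)}
      \<le> exp (- lam * v) * (exp (lam * mu 2) * (1 + a)) ^ l" for l v
  proof -
    define J where "J = (\<lambda>j. (2::nat, j)) ` {1..l}"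
    have fin: "finite J" by (simp add: J_def)
    have JI: "J \<subseteq> {1, 2} \<times> {1..}" by (auto simp: J_def)
    have inj: "inj_on (\<lambda>j. (2::nat, j)) A" for A :: "nat set" by (simp add: inj_on_def)
    have sumJ: "(\<Sum>i\<in>J. X (fst i) (snd i) \<omega>) = (\<Sum>j\<in>{1..l}. X 2 j \<omega>)" for \<omega>
      by (simp add: J_def sum.reindex inj)
    have prodJ: "(\<Prod>i\<in>J. exp (lam * (1 * mu (fst i))) * (1 + a)) = (exp (lam * mu 2) * (1 + a)) ^ l"
      by (simp add: J_def prod.reindex inj)
    have "measure M {\<omega> \<in> space M. v \<le> 1 * (\<Sum>i\<in>J. X (fst i) (snd i) \<omega>)}
        \<le> exp (- lam * v) * (\<Prod>i\<in>J. exp (lam * (1 * mu (fst i))) * (1 + a))"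
    proof (rule chern_sum[OF \<open>prob_space M\<close> indep fin JI lam])
      fix i assume i: "i \<in> J"
      then have "fst i \<in> {1, 2}" "snd i \<ge> 1" using JI by auto
      then show "(\<integral>\<^sup>+\<omega>. ennreal (exp (lam * (1 * X (fst i) (snd i) \<omega>))) \<partial>M)
          \<le> ennreal (exp (lam * (1 * mu (fst i))) * (1 + a))"
        by (rule mgf) simp
    next
      fix i show "0 \<le> exp (lam * (1 * mu (fst i))) * (1 + a)" using a0 by simp
    qed
    then show ?thesis unfolding sumJ prodJ by simp
  qed
  have setm: "{\<omega> \<in> space M. v \<le> f \<omega>} \<in> sets M" if "f \<in> borel_measurable M" for f and v :: real
    using that by measurable
  have summ: "(\<lambda>\<omega>. s * (X b' (Suc k) \<omega> + (\<Sum>j\<in>{Suc (Suc k)..l}. X b j \<omega>))) \<in> borel_measurable M"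
    if "b \<in> {1, 2}" "b' \<in> {1, 2}" for b b' k l s
  proof -
    have "(\<lambda>\<omega>. (\<Sum>j\<in>{Suc (Suc k)..l}. X b j \<omega>)) \<in> borel_measurable M"
      by (rule borel_measurable_sum) (use meas that in auto)
    moreover have "X b' (Suc k) \<in> borel_measurable M" using meas that by auto
    ultimately show ?thesis by measurable
  qed
  have summ0: "(\<lambda>\<omega>. (\<Sum>j\<in>{1..l}. X 2 j \<omega>)) \<in> borel_measurable M" for l
    by (rule borel_measurable_sum) (use meas in auto)
  define p1 where "p1 = exp (lam * \<mu>1) * (1 + a)"
  define q2 where "q2 = exp (lam * \<mu>2) * (1 + a)"
  define p2 where "p2 = exp (lam * (- \<mu>2)) * (1 + a)"
  define q1 where "q1 = exp (lam * (- \<mu>1)) * (1 + a)"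
  have upper: "measure M {\<omega> \<in> space M. v \<le> Yw X l \<omega>}
      \<le> exp (- lam * v) * q2 ^ l + (\<Sum>k<l. exp (- lam * v) * (p1 * q2 ^ (l - Suc k)))" for l v
  proof -
    define U where "U k = {\<omega> \<in> space M. v \<le> 1 * (X 1 (Suc k) \<omega> + (\<Sum>j\<in>{Suc (Suc k)..l}. X 2 j \<omega>))}" for k
    define U0 where "U0 = {\<omega> \<in> space M. v \<le> (\<Sum>j\<in>{1..l}. X 2 j \<omega>)}"
    have Us: "U k \<in> sets M" for k unfolding U_def by (rule setm[OF summ]) auto
    have U0s: "U0 \<in> sets M" unfolding U0_def by (rule setm[OF summ0])
    have sub: "{\<omega> \<in> space M. v \<le> Yw X l \<omega>} \<subseteq> U0 \<union> (\<Union>k\<in>{..<l}. U k)"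
    proof
      fix \<omega> assume \<omega>: "\<omega> \<in> {\<omega> \<in> space M. v \<le> Yw X l \<omega>}"
      from Yw_upper[of X l \<omega>] show "\<omega> \<in> U0 \<union> (\<Union>k\<in>{..<l}. U k)"
      proof
        assume "Yw X l \<omega> \<le> (\<Sum>j\<in>{1..l}. X 2 j \<omega>)"
        then show ?thesis using \<omega> by (auto simp: U0_def)
      next
        assume "\<exists>k<l. Yw X l \<omega> \<le> X 1 (Suc k) \<omega> + (\<Sum>j\<in>{Suc (Suc k)..l}. X 2 j \<omega>)"
        then obtain k where k: "k < l" "Yw X l \<omega> \<le> X 1 (Suc k) \<omega> + (\<Sum>j\<in>{Suc (Suc k)..l}. X 2 j \<omega>)" by blast
        then have "\<omega> \<in> U k" using \<omega> by (simp add: U_def)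
        then show ?thesis using k(1) by blast
      qed
    qed
    have "measure M {\<omega> \<in> space M. v \<le> Yw X l \<omega>} \<le> measure M (U0 \<union> (\<Union>k\<in>{..<l}. U k))"
      by (rule finite_measure_mono[OF sub]) (use Us U0s in auto)
    also have "\<dots> \<le> measure M U0 + measure M (\<Union>k\<in>{..<l}. U k)"
      by (rule measure_Un_le) (use Us U0s in auto)
    also have "measure M (\<Union>k\<in>{..<l}. U k) \<le> (\<Sum>k<l. measure M (U k))"
      by (rule finite_measure_subadditive_finite) (use Us in auto)
    also have "measure M U0 \<le> exp (- lam * v) * q2 ^ l"
      unfolding U0_def q2_def using gen0[of v l] by (simp add: mu_def)
    also have "(\<Sum>k<l. measure M (U k)) \<le> (\<Sum>k<l. exp (- lam * v) * (p1 * q2 ^ (l - Suc k)))"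
    proof (rule sum_mono)
      fix k assume "k \<in> {..<l}"
      show "measure M (U k) \<le> exp (- lam * v) * (p1 * q2 ^ (l - Suc k))"
        unfolding U_def p1_def q2_def using gen[of 2 1 1 v k l] by (simp add: mu_def)
    qed
    finally show ?thesis by simp
  qed
  have lower: "measure M {\<omega> \<in> space M. Yw X l \<omega> \<le> - v}
      \<le> (\<Sum>k<l. exp (- lam * v) * (p2 * q1 ^ (l - Suc k)))" if v: "v > 0" for l v
  proof -
    define U where "U k = {\<omega> \<in> space M. v \<le> -1 * (X 2 (Suc k) \<omega> + (\<Sum>j\<in>{Suc (Suc k)..l}. X 1 j \<omega>))}" for k
    have Us: "U k \<in> sets M" for k unfolding U_def by (rule setm[OF summ]) auto
    have sub: "{\<omega> \<in> space M. Yw X l \<omega> \<le> - v} \<subseteq> (\<Union>k\<in>{..<l}. U k)"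
    proof
      fix \<omega> assume \<omega>: "\<omega> \<in> {\<omega> \<in> space M. Yw X l \<omega> \<le> - v}"
      then have "\<not> Yw X l \<omega> \<ge> 0" using v by auto
      with Yw_lower[of X l \<omega>] obtain k where
        "k < l" "Yw X l \<omega> \<ge> X 2 (Suc k) \<omega> + (\<Sum>j\<in>{Suc (Suc k)..l}. X 1 j \<omega>)" by blast
      then have "\<omega> \<in> U k" using \<omega> by (simp add: U_def)
      then show "\<omega> \<in> (\<Union>k\<in>{..<l}. U k)" using \<open>k < l\<close> by blast
    qed
    have "measure M {\<omega> \<in> space M. Yw X l \<omega> \<le> - v} \<le> measure M (\<Union>k\<in>{..<l}. U k)"
      by (rule finite_measure_mono[OF sub]) (use Us in auto)
    also have "\<dots> \<le> (\<Sum>k<l. measure M (U k))"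
      by (rule finite_measure_subadditive_finite) (use Us in auto)
    also have "(\<Sum>k<l. measure M (U k)) \<le> (\<Sum>k<l. exp (- lam * v) * (p2 * q1 ^ (l - Suc k)))"
    proof (rule sum_mono)
      fix k assume "k \<in> {..<l}"
      show "measure M (U k) \<le> exp (- lam * v) * (p2 * q1 ^ (l - Suc k))"
        unfolding U_def p2_def q1_def using gen[of 1 2 "-1" v k l] by (simp add: mu_def)
    qed
    finally show ?thesis .
  qed
  define A1 where "A1 = lam * \<mu>1"
  define A2 where "A2 = lam * (- \<mu>2)"
  have a1: "a \<le> A1" and a2: "a \<le> A2" using aA1 aA2 by (simp_all add: A1_def A2_def)
  have q2e: "q2 = exp (- A2) * (1 + a)" by (simp add: q2_def A2_def)
  have q1e: "q1 = exp (- A1) * (1 + a)" by (simp add: q1_def A1_def)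
  have p1e: "p1 = exp A1 * (1 + a)" by (simp add: p1_def A1_def)
  have p2e: "p2 = exp A2 * (1 + a)" by (simp add: p2_def A2_def)
  have upper2: "measure M {\<omega> \<in> space M. v \<le> Yw X l \<omega>} \<le> exp (- lam * v) * (exp A1 * exp A2)" for l v
  proof -
    have "exp (- lam * v) * q2 ^ l + (\<Sum>k<l. exp (- lam * v) * (p1 * q2 ^ (l - Suc k)))
        = exp (- lam * v) * (q2 ^ l + p1 * (\<Sum>k<l. q2 ^ (l - Suc k)))"
      by (simp add: sum_distrib_left algebra_simps)
    also have "\<dots> \<le> exp (- lam * v) * (exp A1 * exp A2)"
      unfolding q2e p1e using final_arith(1)[OF a22 a1 a2, of l] by (intro mult_left_mono) auto
    finally show ?thesis using upper[of v l] by linarith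
  qed
  have lower2: "measure M {\<omega> \<in> space M. Yw X l \<omega> \<le> - v} \<le> exp (- lam * v) * (exp A1 * exp A2)"
    if "v > 0" for l v
  proof -
    have "(\<Sum>k<l. exp (- lam * v) * (p2 * q1 ^ (l - Suc k)))
        = exp (- lam * v) * (p2 * (\<Sum>k<l. q1 ^ (l - Suc k)))"
      by (simp add: sum_distrib_left algebra_simps)
    also have "\<dots> \<le> exp (- lam * v) * (exp A1 * exp A2)"
      unfolding q1e p2e using final_arith(2)[OF a22 a1 a2, of l] by (intro mult_left_mono) auto
    finally show ?thesis using lower[OF that, of l] by linarith
  qed
  have Ym: "Yw X l \<in> borel_measurable M" for l
  proof (induction l)
    case 0
    then show ?case by simp
  next
    case (Suc n)
    have e: "Yw X (Suc n) = (\<lambda>\<omega>. Yw X n \<omega> + (if Yw X n \<omega> < 0 then X 1 (Suc n) \<omega> else X 2 (Suc n) \<omega>))"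
      by (rule ext, rule Yw_Suc)
    have "X 1 (Suc n) \<in> borel_measurable M" "X 2 (Suc n) \<in> borel_measurable M" using meas by auto
    then show ?case unfolding e using Suc.IH by measurable
  qed
  show ?thesis
  proof (intro allI impI)
    fix l :: nat and v :: real assume "l \<ge> 1"
    show "measure M {\<omega> \<in> space M. \<bar>Yw X l \<omega>\<bar> \<ge> v} \<le> 2 * exp (- c * sqrt \<beta> * (v - \<mu>1 + \<mu>2))"
    proof (cases "v \<le> \<mu>1 - \<mu>2")
      case True
      have "0 \<le> - c * sqrt \<beta> * (v - \<mu>1 + \<mu>2)"
      proof -
        have "0 \<le> c * sqrt \<beta>" using c1 bpos by simp
        moreover have "v - \<mu>1 + \<mu>2 \<le> 0" using True by linarith
        ultimately have "c * sqrt \<beta> * (v - \<mu>1 + \<mu>2) \<le> 0" by (rule mult_nonneg_nonpos)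
        then show ?thesis by simp
      qed
      then have "1 \<le> exp (- c * sqrt \<beta> * (v - \<mu>1 + \<mu>2))" by simp
      moreover have "measure M {\<omega> \<in> space M. \<bar>Yw X l \<omega>\<bar> \<ge> v} \<le> 1" by (rule prob_le_1)
      ultimately show ?thesis by linarith
    next
      case False
      then have v: "v > 0" using mu1 mu2 by linarith
      have sub: "{\<omega> \<in> space M. \<bar>Yw X l \<omega>\<bar> \<ge> v} \<subseteq> {\<omega> \<in> space M. v \<le> Yw X l \<omega>} \<union> {\<omega> \<in> space M. Yw X l \<omega> \<le> - v}"
        by auto
      have s1: "{\<omega> \<in> space M. v \<le> Yw X l \<omega>} \<in> sets M" using Ym[of l] by measurable
      have s2: "{\<omega> \<in> space M. Yw X l \<omega> \<le> - v} \<in> sets M" using Ym[of l] by measurable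
      have "measure M {\<omega> \<in> space M. \<bar>Yw X l \<omega>\<bar> \<ge> v}
          \<le> measure M ({\<omega> \<in> space M. v \<le> Yw X l \<omega>} \<union> {\<omega> \<in> space M. Yw X l \<omega> \<le> - v})"
        by (rule finite_measure_mono[OF sub]) (use s1 s2 in auto)
      also have "\<dots> \<le> measure M {\<omega> \<in> space M. v \<le> Yw X l \<omega>} + measure M {\<omega> \<in> space M. Yw X l \<omega> \<le> - v}"
        by (rule measure_Un_le[OF s1 s2])
      also have "\<dots> \<le> 2 * (exp (- lam * v) * (exp A1 * exp A2))"
        using upper2[of v l] lower2[OF v, of l] by linarith
      also have "exp (- lam * v) * (exp A1 * exp A2) = exp (- c * sqrt \<beta> * (v - \<mu>1 + \<mu>2))"
        by (simp add: A1_def A2_def lam_def algebra_simps flip: exp_add)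
      finally show ?thesis .
    qed
  qed
qed


end
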